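(* Let $(\underline{\mathbf{V}},\underline{\mathbf{P}})$ be a subsolution and $(\overline{\mathbf{V}},\overline{\mathbf{P}})$ a supersolution of the asymptotic system described in the context, both locally bounded in time, with $\underline{V}_j(0)\le\overline{V}_j(0)$ and $\underline{P}_j(0)\le\overline{P}_j(0)$ for all $j\in\mathbb{Z}$. Then $\underline{V}_j(t)\le\overline{V}_j(t)$ and $\underline{P}_j(t)\le\overline{P}_j(t)$ for all $t>0$, $j\in\mathbb{Z}$. If moreover $(\underline{\mathbf{V}}(0),\underline{\mathbf{P}}(0))\not\equiv(\overline{\mathbf{V}}(0),\overline{\mathbf{P}}(0))$, then $\underline{V}_j(t)<\overline{V}_j(t)$ and $\underline{P}_j(t)<\overline{P}_j(t)$ for all $t>0$, $j\in\mathbb{Z}$.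
   Context: Fix $\alpha,\beta>0$ and $f\in\mathscr{C}^1([0,1])$ with $f(0)=f(1)=0$, $0<f(u)\le f'(0)u$ on $(0,1)$, extended to a locally Lipschitz function on $\mathbb{R}$ negative on $\mathbb{R}\setminus[0,1]$. The asymptotic system is $V_j'=-2\alpha V_j+\beta(P_j+P_{j+1})$, $P_j'=f(P_j)+\alpha(V_j+V_{j-1})-2\beta P_j$ ($t>0$, $j\in\mathbb{Z}$). A supersolution is $(\overline{\mathbf{V}},\overline{\mathbf{P}})$ with $\overline{V}_j,\overline{P}_j\in\mathscr{C}^1([0,+\infty),\mathbb{R})$ such that for all $t>0$, $j$: $\overline{V}_j'\ge-2\alpha\overline{V}_j+\beta(\overline{P}_j+\overline{P}_{j+1})$ and $\overline{P}_j'\ge f(\overline{P}_j)+\alpha(\overline{V}_j+\overline{V}_{j-1})-2\beta\overline{P}_j$; a subsolution has both inequalities reversed. Locally bounded in time: $\sup_{t\in[0,T],j\in\mathbb{Z}}(|V_j(t)|+|P_j(t)|)<\infty$ for every $T>0$. *)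

theory Defs
  imports "HOL-Analysis.Analysis"
begin

definition KPP_reaction :: "(real \<Rightarrow> real) \<Rightarrow> bool" where
  "KPP_reaction f \<longleftrightarrow>
     (\<exists>df. (\<forall>u\<in>{0..1}. (f has_real_derivative df u) (at u within {0..1}))
        \<and> continuous_on {0..1} df
        \<and> f 0 = 0 \<and> f 1 = 0
        \<and> (\<forall>u\<in>{0<..<1}. 0 < f u \<and> f u \<le> df 0 * u))
     \<and> (\<forall>x. \<exists>U. open U \<and> x \<in> U \<and> (\<exists>L. \<forall>y\<in>U. \<forall>z\<in>U. \<bar>f y - f z\<bar> \<le> L * \<bar>y - z\<bar>))
     \<and> (\<forall>u. u \<notin> {0..1} \<longrightarrow> f u < 0)"

definition C1_halfline :: "(real \<Rightarrow> real) \<Rightarrow> (real \<Rightarrow> real) \<Rightarrow> bool" where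
  "C1_halfline u g \<longleftrightarrow>
     (\<forall>t\<ge>0. (u has_real_derivative g t) (at t within {0..})) \<and> continuous_on {0..} g"

definition is_supersolution ::
  "real \<Rightarrow> real \<Rightarrow> (real \<Rightarrow> real) \<Rightarrow> (int \<Rightarrow> real \<Rightarrow> real) \<Rightarrow> (int \<Rightarrow> real \<Rightarrow> real) \<Rightarrow> bool" where
  "is_supersolution \<alpha> \<beta> f V P \<longleftrightarrow>
     (\<exists>V' P'. (\<forall>j. C1_halfline (V j) (V' j) \<and> C1_halfline (P j) (P' j)) \<and>
       (\<forall>t>0. \<forall>j. V' j t \<ge> -2*\<alpha>*V j t + \<beta>*(P j t + P (j+1) t)
               \<and> P' j t \<ge> f (P j t) + \<alpha>*(V j t + V (j-1) t) - 2*\<beta>*P j t))"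

definition is_subsolution ::
  "real \<Rightarrow> real \<Rightarrow> (real \<Rightarrow> real) \<Rightarrow> (int \<Rightarrow> real \<Rightarrow> real) \<Rightarrow> (int \<Rightarrow> real \<Rightarrow> real) \<Rightarrow> bool" where
  "is_subsolution \<alpha> \<beta> f V P \<longleftrightarrow>
     (\<exists>V' P'. (\<forall>j. C1_halfline (V j) (V' j) \<and> C1_halfline (P j) (P' j)) \<and>
       (\<forall>t>0. \<forall>j. V' j t \<le> -2*\<alpha>*V j t + \<beta>*(P j t + P (j+1) t)
               \<and> P' j t \<le> f (P j t) + \<alpha>*(V j t + V (j-1) t) - 2*\<beta>*P j t))"

definition locally_bounded_in_time ::
  "(int \<Rightarrow> real \<Rightarrow> real) \<Rightarrow> (int \<Rightarrow> real \<Rightarrow> real) \<Rightarrow> bool" where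
  "locally_bounded_in_time V P \<longleftrightarrow>
     (\<forall>T>0. \<exists>M. \<forall>t\<in>{0..T}. \<forall>j. \<bar>V j t\<bar> + \<bar>P j t\<bar> \<le> M)"

end

theory Submission
  imports Defs
begin


lemma mvt3:
  fixes g g' :: "real \<Rightarrow> real"
  assumes "a < b" "continuous_on {a..b} g"
    "\<And>x. a < x \<Longrightarrow> x < b \<Longrightarrow> (g has_real_derivative g' x) (at x)"
  shows "\<exists>z. a < z \<and> z < b \<and> g b - g a = (b - a) * g' z"
proof -
  obtain l z where "a < z" "z < b" "(g has_real_derivative l) (at z)" "g b - g a = (b - a) * l"
    using MVT[OF assms(1,2)] assms(3) real_differentiable_def by metis
  moreover have "l = g' z" using DERIV_unique calculation assms(3) by metis
  ultimately show ?thesis by blast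
qed

lemma last_nonpos:
  fixes g g' :: "real \<Rightarrow> real"
  assumes "a \<le> t" "continuous_on {a..t} g"
    "\<And>x. a < x \<Longrightarrow> x < t \<Longrightarrow> (g has_real_derivative g' x) (at x)"
    "g a \<le> 0" "\<And>x. a < x \<Longrightarrow> x < t \<Longrightarrow> g x > 0 \<Longrightarrow> g' x \<le> D" "D \<ge> 0"
  shows "g t \<le> D * (t - a)"
proof (cases "g t \<le> 0")
  case True
  have "0 \<le> D * (t - a)" using assms(1,6) by simp
  then show ?thesis using True by linarith
next
  case False
  define S where "S = {a..t} \<inter> g -` {..0}"
  have aS: "a \<in> S" using assms S_def by auto
  have bdd: "bdd_above S" unfolding S_def by (auto intro: bdd_aboveI[of _ t])
  have cl: "closed S" unfolding S_def
    by (rule continuous_closed_preimage[OF assms(2)]) auto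
  define s0 where "s0 = Sup S"
  have s0S: "s0 \<in> S" unfolding s0_def using closed_contains_Sup aS bdd cl by blast
  have "a \<le> s0" unfolding s0_def using aS bdd by (simp add: cSup_upper)
  have gs0: "g s0 \<le> 0" "s0 \<le> t" using s0S S_def by auto
  have "s0 < t" using gs0 False by (cases "s0 = t") auto
  have pos: "g x > 0" if "s0 < x" "x \<le> t" for x
  proof (rule ccontr)
    assume "\<not> g x > 0"
    then have "x \<in> S" using S_def that \<open>a \<le> s0\<close> by auto
    then have "x \<le> s0" unfolding s0_def using bdd by (simp add: cSup_upper)
    then show False using that by auto
  qed
  obtain z where z: "s0 < z" "z < t" "g t - g s0 = (t - s0) * g' z"
    using mvt3[OF \<open>s0 < t\<close>, of g g'] assms(2,3) \<open>a \<le> s0\<close>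
    by (metis atLeastAtMost_iff continuous_on_subset subsetI order_trans order_le_less_trans)
  have "g' z \<le> D" using assms(5) z pos \<open>a \<le> s0\<close> by auto
  then have "(t - s0) * g' z \<le> (t - s0) * D" using \<open>s0 < t\<close> by (simp add: mult_left_mono)
  also have "\<dots> \<le> (t - a) * D" using \<open>a \<le> s0\<close> assms(6) by (simp add: mult_right_mono)
  finally show ?thesis using z gs0 by (simp add: mult.commute)
qed

lemma pos_prop:
  fixes g g' h :: "real \<Rightarrow> real"
  assumes "0 < T" "continuous_on {0..T} g"
    "\<And>x. 0 < x \<Longrightarrow> x < T \<Longrightarrow> (g has_real_derivative g' x) (at x)"
    "g 0 \<ge> 0" "\<And>x. 0 < x \<Longrightarrow> x < T \<Longrightarrow> g' x \<ge> - K * g x + h x"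
    "\<And>x. 0 < x \<Longrightarrow> x < T \<Longrightarrow> h x \<ge> 0"
    "g 0 > 0 \<or> (\<forall>x. 0 < x \<longrightarrow> x < T \<longrightarrow> h x > 0)"
  shows "g T > 0"
proof -
  define \<phi> where "\<phi> x = exp (K * x) * g x" for x
  have c: "continuous_on {0..T} \<phi>" unfolding \<phi>_def
    by (intro continuous_intros assms(2))
  have d: "(\<phi> has_real_derivative (exp (K * x) * (g' x + K * g x))) (at x)"
    if "0 < x" "x < T" for x
    unfolding \<phi>_def
    by (rule derivative_eq_intros refl assms(3)[OF that] | simp add: algebra_simps)+
  obtain z where z: "0 < z" "z < T" "\<phi> T - \<phi> 0 = (T - 0) * (exp (K * z) * (g' z + K * g z))"
    using mvt3[OF assms(1) c d] by blast
  have hz: "g' z + K * g z \<ge> h z" using assms(5)[OF z(1,2)] by simp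
  have "\<phi> T > 0"
  proof (cases "g 0 > 0")
    case True
    have "0 \<le> T * (exp (K * z) * (g' z + K * g z))"
      using assms(1) assms(6)[OF z(1,2)] hz by (intro mult_nonneg_nonneg) auto
    then show ?thesis using z True by (simp add: \<phi>_def)
  next
    case False
    then have "h z > 0" using assms(7) z by auto
    then have "0 < T * (exp (K * z) * (g' z + K * g z))"
      using assms(1) hz by (intro mult_pos_pos) auto
    then show ?thesis using z assms(4) by (simp add: \<phi>_def)
  qed
  then show ?thesis unfolding \<phi>_def by (simp add: zero_less_mult_iff)
qed

lemma lip_compact:
  assumes "\<forall>x. \<exists>U. open U \<and> x \<in> U \<and> (\<exists>L. \<forall>y\<in>U. \<forall>z\<in>U. \<bar>f y - f z\<bar> \<le> L * \<bar>y - z\<bar>)"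
  shows "\<exists>L\<ge>0. \<forall>y\<in>{-B..B}. \<forall>z\<in>{-B..B}. \<bar>f y - f (z::real)\<bar> \<le> L * \<bar>y - z\<bar>"
proof -
  have ll: "local_lipschitz {0::real} {-B..B} (\<lambda>t. f)"
  proof (rule local_lipschitzI)
    fix t x assume "t \<in> {0::real}" "x \<in> {-B..B}"
    obtain U L where U: "open U" "x \<in> U" "\<forall>y\<in>U. \<forall>z\<in>U. \<bar>f y - f z\<bar> \<le> L * \<bar>y - z\<bar>"
      using assms by blast
    obtain e where e: "e > 0" "cball x e \<subseteq> U" using open_contains_cball U by blast
    have "(max L 0)-lipschitz_on (cball x e \<inter> {-B..B}) f"
    proof (rule lipschitz_onI)
      fix y z assume "y \<in> cball x e \<inter> {-B..B}" "z \<in> cball x e \<inter> {-B..B}"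
      then have "\<bar>f y - f z\<bar> \<le> L * \<bar>y - z\<bar>" using U e by blast
      also have "\<dots> \<le> max L 0 * \<bar>y - z\<bar>" by (simp add: mult_right_mono)
      finally show "dist (f y) (f z) \<le> max L 0 * dist y z" by (simp add: dist_real_def)
    qed auto
    then show "\<exists>u>0. \<exists>L. \<forall>t\<in>cball t u \<inter> {0}. L-lipschitz_on (cball x u \<inter> {-B..B}) f"
      using e by blast
  qed
  obtain L where "\<And>t. t \<in> {0::real} \<Longrightarrow> L-lipschitz_on {-B..B} f"
    using local_lipschitz_compact_implies_lipschitz[OF ll] by auto
  then have L: "L-lipschitz_on {-B..B} f" by auto
  show ?thesis
    using lipschitz_on_nonneg[OF L] lipschitz_onD[OF L] by (auto simp: dist_real_def)
qed

lemma C1_facts: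
  assumes "C1_halfline u g"
  shows "continuous_on {0..} u" "\<And>t. t > 0 \<Longrightarrow> (u has_real_derivative g t) (at t)"
proof -
  show "continuous_on {0..} u"
    using assms unfolding C1_halfline_def by (intro DERIV_continuous_on) auto
  fix t :: real assume "t > 0"
  then have "at t within {0..} = at t" by (intro at_within_interior) auto
  then show "(u has_real_derivative g t) (at t)"
    using assms \<open>t > 0\<close> unfolding C1_halfline_def by (metis less_imp_le)
qed



theorem proposition6p2:
  fixes \<alpha> \<beta> :: real and f :: "real \<Rightarrow> real"
    and Vl Pl Vu Pu :: "int \<Rightarrow> real \<Rightarrow> real"
  assumes "\<alpha> > 0" and "\<beta> > 0" and "KPP_reaction f"
    and "is_subsolution \<alpha> \<beta> f Vl Pl" and "is_supersolution \<alpha> \<beta> f Vu Pu"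
    and "locally_bounded_in_time Vl Pl" and "locally_bounded_in_time Vu Pu"
    and "\<forall>j. Vl j 0 \<le> Vu j 0 \<and> Pl j 0 \<le> Pu j 0"
  shows "(\<forall>t>0. \<forall>j. Vl j t \<le> Vu j t \<and> Pl j t \<le> Pu j t)
     \<and> ((\<exists>j. Vl j 0 \<noteq> Vu j 0 \<or> Pl j 0 \<noteq> Pu j 0) \<longrightarrow>
          (\<forall>t>0. \<forall>j. Vl j t < Vu j t \<and> Pl j t < Pu j t))"
proof -
  note a\<alpha> = assms(1) and a\<beta> = assms(2)
  obtain V'l P'l where subC: "\<And>j. C1_halfline (Vl j) (V'l j) \<and> C1_halfline (Pl j) (P'l j)"
    and subI: "\<And>t j. t > 0 \<Longrightarrow> V'l j t \<le> -2*\<alpha>*Vl j t + \<beta>*(Pl j t + Pl (j+1) t)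
               \<and> P'l j t \<le> f (Pl j t) + \<alpha>*(Vl j t + Vl (j-1) t) - 2*\<beta>*Pl j t"
    using assms(4) unfolding is_subsolution_def by blast
  obtain V'u P'u where supC: "\<And>j. C1_halfline (Vu j) (V'u j) \<and> C1_halfline (Pu j) (P'u j)"
    and supI: "\<And>t j. t > 0 \<Longrightarrow> V'u j t \<ge> -2*\<alpha>*Vu j t + \<beta>*(Pu j t + Pu (j+1) t)
               \<and> P'u j t \<ge> f (Pu j t) + \<alpha>*(Vu j t + Vu (j-1) t) - 2*\<beta>*Pu j t"
    using assms(5) unfolding is_supersolution_def by blast
  have cVl: "\<And>j. continuous_on {0..} (Vl j)" and dVl: "\<And>j t. t > 0 \<Longrightarrow> (Vl j has_real_derivative V'l j t) (at t)"
    using C1_facts subC by blast+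
  have cPl: "\<And>j. continuous_on {0..} (Pl j)" and dPl: "\<And>j t. t > 0 \<Longrightarrow> (Pl j has_real_derivative P'l j t) (at t)"
    using C1_facts subC by blast+
  have cVu: "\<And>j. continuous_on {0..} (Vu j)" and dVu: "\<And>j t. t > 0 \<Longrightarrow> (Vu j has_real_derivative V'u j t) (at t)"
    using C1_facts supC by blast+
  have cPu: "\<And>j. continuous_on {0..} (Pu j)" and dPu: "\<And>j t. t > 0 \<Longrightarrow> (Pu j has_real_derivative P'u j t) (at t)"
    using C1_facts supC by blast+
  have loclip: "\<forall>x. \<exists>U. open U \<and> x \<in> U \<and> (\<exists>L. \<forall>y\<in>U. \<forall>z\<in>U. \<bar>f y - f z\<bar> \<le> L * \<bar>y - z\<bar>)"
    using assms(3) unfolding KPP_reaction_def by blast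
  have bounds: "\<exists>B L. L \<ge> 0 \<and> (\<forall>t\<in>{0..T}. \<forall>j. \<bar>Vl j t\<bar> \<le> B \<and> \<bar>Pl j t\<bar> \<le> B \<and> \<bar>Vu j t\<bar> \<le> B \<and> \<bar>Pu j t\<bar> \<le> B)
     \<and> (\<forall>y\<in>{-B..B}. \<forall>z\<in>{-B..B}. \<bar>f y - f z\<bar> \<le> L * \<bar>y - z\<bar>)" if "T > 0" for T
  proof -
    obtain B1 where B1: "\<forall>t\<in>{0..T}. \<forall>j. \<bar>Vl j t\<bar> + \<bar>Pl j t\<bar> \<le> B1"
      using assms(6) \<open>T > 0\<close> unfolding locally_bounded_in_time_def by blast
    obtain B2 where B2: "\<forall>t\<in>{0..T}. \<forall>j. \<bar>Vu j t\<bar> + \<bar>Pu j t\<bar> \<le> B2"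
      using assms(7) \<open>T > 0\<close> unfolding locally_bounded_in_time_def by blast
    define B where "B = max B1 B2"
    obtain L where "L \<ge> 0" "\<forall>y\<in>{-B..B}. \<forall>z\<in>{-B..B}. \<bar>f y - f z\<bar> \<le> L * \<bar>y - z\<bar>"
      using lip_compact[OF loclip] by blast
    moreover have "\<forall>t\<in>{0..T}. \<forall>j. \<bar>Vl j t\<bar> \<le> B \<and> \<bar>Pl j t\<bar> \<le> B \<and> \<bar>Vu j t\<bar> \<le> B \<and> \<bar>Pu j t\<bar> \<le> B"
    proof (intro ballI allI)
      fix t j assume "t \<in> {0..T}"
      then show "\<bar>Vl j t\<bar> \<le> B \<and> \<bar>Pl j t\<bar> \<le> B \<and> \<bar>Vu j t\<bar> \<le> B \<and> \<bar>Pu j t\<bar> \<le> B"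
        using B1 B2 unfolding B_def by (smt (verit) max.cobounded1 max.cobounded2)
    qed
    ultimately show ?thesis by blast
  qed
  have weak: "Vl j t \<le> Vu j t \<and> Pl j t \<le> Pu j t" if "0 < T" "0 \<le> t" "t \<le> T" for T t j
  proof -
    obtain B L where L0: "L \<ge> 0" and B: "\<And>t j. t\<in>{0..T} \<Longrightarrow> \<bar>Vl j t\<bar> \<le> B \<and> \<bar>Pl j t\<bar> \<le> B \<and> \<bar>Vu j t\<bar> \<le> B \<and> \<bar>Pu j t\<bar> \<le> B"
      and L: "\<And>y z. y\<in>{-B..B} \<Longrightarrow> z\<in>{-B..B} \<Longrightarrow> \<bar>f y - f z\<bar> \<le> L * \<bar>y - z\<bar>"
      using bounds[OF \<open>0 < T\<close>] by blast
    define C where "C = 2*\<alpha> + 2*\<beta> + L + 1"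
    have C0: "C > 0" unfolding C_def using a\<alpha> a\<beta> L0 by simp
    define h where "h = 1 / (2*C)"
    have h0: "h > 0" unfolding h_def using C0 by simp
    have step: "\<forall>j. Vl j t \<le> Vu j t \<and> Pl j t \<le> Pu j t"
      if "0 \<le> a" "a \<le> t" "t \<le> T" "t \<le> a + h" "\<forall>j. Vl j a \<le> Vu j a \<and> Pl j a \<le> Pu j a" for a t
    proof -
      define X where "X = {x. x = 0 \<or> (\<exists>j s. a \<le> s \<and> s \<le> t \<and> (x = Vl j s - Vu j s \<or> x = Pl j s - Pu j s))}"
      define M where "M = Sup X"
      have X0: "0 \<in> X" unfolding X_def by simp
      have bddX: "bdd_above X"
      proof (rule bdd_aboveI[of _ "2*B"])
        fix x assume "x \<in> X"
        then consider "x = 0" | j s where "a \<le> s" "s \<le> t" "x = Vl j s - Vu j s \<or> x = Pl j s - Pu j s"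
          unfolding X_def by blast
        then show "x \<le> 2*B"
        proof cases
          case 1 then show ?thesis using B[of 0 0] that by auto
        next
          case 2
          then have "s \<in> {0..T}" using that by auto
          then show ?thesis using B[of s j] 2 by auto
        qed
      qed
      have upper: "x \<le> M" if "x \<in> X" for x unfolding M_def using bddX that by (simp add: cSup_upper)
      have M0: "M \<ge> 0" using upper X0 by simp
      have inX1: "Vl j s - Vu j s \<in> X" "Pl j s - Pu j s \<in> X" if "a \<le> s" "s \<le> t" for j s
        unfolding X_def using that by blast+
      have key: "Vl j s - Vu j s \<le> C*(s-a)*M \<and> Pl j s - Pu j s \<le> C*(s-a)*M" if "a \<le> s" "s \<le> t" for j s
      proof
        have "(\<lambda>x. Vl j x - Vu j x) s \<le> (2*\<beta>*M) * (s - a)"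
        proof (rule last_nonpos[where g' = "\<lambda>x. V'l j x - V'u j x"])
          show "continuous_on {a..s} (\<lambda>x. Vl j x - Vu j x)"
            by (intro continuous_intros continuous_on_subset[OF cVl] continuous_on_subset[OF cVu]) (use \<open>0 \<le> a\<close> in auto)
          show "((\<lambda>x. Vl j x - Vu j x) has_real_derivative V'l j x - V'u j x) (at x)" if "a < x" "x < s" for x
            using that \<open>0 \<le> a\<close> by (intro DERIV_diff dVl dVu) auto
          show "V'l j x - V'u j x \<le> 2*\<beta>*M" if "a < x" "x < s" "0 < Vl j x - Vu j x" for x
          proof -
            have x0: "x > 0" using that \<open>0 \<le> a\<close> by auto
            have "V'l j x - V'u j x \<le> -2*\<alpha>*(Vl j x - Vu j x) + \<beta>*((Pl j x - Pu j x) + (Pl (j+1) x - Pu (j+1) x))"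
              using subI[OF x0, of j] supI[OF x0, of j] by (simp add: algebra_simps)
            also have "\<dots> \<le> \<beta>*(M + M)"
            proof -
              have "\<beta>*((Pl j x - Pu j x) + (Pl (j+1) x - Pu (j+1) x)) \<le> \<beta>*(M + M)"
                using upper[OF inX1(2)[of x j]] upper[OF inX1(2)[of x "j+1"]] that a\<beta> \<open>s \<le> t\<close>
                by (intro mult_left_mono) auto
              moreover have "-2*\<alpha>*(Vl j x - Vu j x) \<le> 0" using that a\<alpha> by simp
              ultimately show ?thesis by linarith
            qed
            finally show ?thesis by simp
          qed
        qed (use that \<open>\<forall>j. Vl j a \<le> Vu j a \<and> Pl j a \<le> Pu j a\<close> a\<beta> M0 in auto)
        also have "\<dots> \<le> C*(s-a)*M"
        proof -
          have "2*\<beta> \<le> C" unfolding C_def using a\<alpha> L0 by simp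
          then have "2*\<beta>*(s-a) \<le> C*(s-a)" using that by (simp add: mult_right_mono)
          then have "2*\<beta>*(s-a)*M \<le> C*(s-a)*M" using M0 by (simp add: mult_right_mono)
          then show ?thesis by (simp add: algebra_simps)
        qed
        finally show "Vl j s - Vu j s \<le> C*(s-a)*M" by simp
      next
        have "(\<lambda>x. Pl j x - Pu j x) s \<le> ((L + 2*\<alpha>)*M) * (s - a)"
        proof (rule last_nonpos[where g' = "\<lambda>x. P'l j x - P'u j x"])
          show "continuous_on {a..s} (\<lambda>x. Pl j x - Pu j x)"
            by (intro continuous_intros continuous_on_subset[OF cPl] continuous_on_subset[OF cPu]) (use \<open>0 \<le> a\<close> in auto)
          show "((\<lambda>x. Pl j x - Pu j x) has_real_derivative P'l j x - P'u j x) (at x)" if "a < x" "x < s" for x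
            using that \<open>0 \<le> a\<close> by (intro DERIV_diff dPl dPu) auto
          show "P'l j x - P'u j x \<le> (L + 2*\<alpha>)*M" if "a < x" "x < s" "0 < Pl j x - Pu j x" for x
          proof -
            have x0: "x > 0" using that \<open>0 \<le> a\<close> by auto
            have xT: "x \<in> {0..T}" using that \<open>0 \<le> a\<close> \<open>s \<le> t\<close> \<open>t \<le> T\<close> by auto
            have "\<bar>f (Pl j x) - f (Pu j x)\<bar> \<le> L * \<bar>Pl j x - Pu j x\<bar>"
              using L[of "Pl j x" "Pu j x"] B[OF xT, of j] by (simp add: abs_le_iff)
            then have "f (Pl j x) - f (Pu j x) \<le> L * \<bar>Pl j x - Pu j x\<bar>" by linarith
            also have "\<dots> \<le> L * M" using upper[OF inX1(2)[of x j]] that \<open>s \<le> t\<close> L0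
              by (simp add: mult_left_mono)
            finally have fL: "f (Pl j x) - f (Pu j x) \<le> L * M" .
            have "P'l j x - P'u j x \<le> (f (Pl j x) - f (Pu j x)) + \<alpha>*((Vl j x - Vu j x) + (Vl (j-1) x - Vu (j-1) x)) - 2*\<beta>*(Pl j x - Pu j x)"
              using subI[OF x0, of j] supI[OF x0, of j] by (simp add: algebra_simps)
            also have "\<dots> \<le> L * M + \<alpha>*(M + M) - 0"
            proof -
              have "\<alpha>*((Vl j x - Vu j x) + (Vl (j-1) x - Vu (j-1) x)) \<le> \<alpha>*(M + M)"
                using upper[OF inX1(1)[of x j]] upper[OF inX1(1)[of x "j-1"]] that a\<alpha> \<open>s \<le> t\<close>
                by (intro mult_left_mono) auto
              moreover have "2*\<beta>*(Pl j x - Pu j x) \<ge> 0" using that a\<beta> by simp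
              ultimately show ?thesis using fL by linarith
            qed
            finally show ?thesis by (simp add: algebra_simps)
          qed
        qed (use that \<open>\<forall>j. Vl j a \<le> Vu j a \<and> Pl j a \<le> Pu j a\<close> a\<alpha> L0 M0 in auto)
        also have "\<dots> \<le> C*(s-a)*M"
        proof -
          have "L + 2*\<alpha> \<le> C" unfolding C_def using a\<beta> by simp
          then have "(L + 2*\<alpha>)*(s-a) \<le> C*(s-a)" using that by (simp add: mult_right_mono)
          then have "(L + 2*\<alpha>)*(s-a)*M \<le> C*(s-a)*M" using M0 by (simp add: mult_right_mono)
          then show ?thesis by (simp add: algebra_simps)
        qed
        finally show "Pl j s - Pu j s \<le> C*(s-a)*M" by simp
      qed
      have half: "x \<le> M / 2" if "x \<in> X" for x
      proof -
        have "C*(s-a)*M \<le> M / 2" if "a \<le> s" "s \<le> t" for s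
        proof -
          have "C*(s-a) \<le> C*h" using that \<open>t \<le> a + h\<close> C0 by (simp add: mult_left_mono)
          also have "C*h = 1/2" unfolding h_def using C0 by simp
          finally show ?thesis using M0 by (metis mult_right_mono mult.commute times_divide_eq_right mult_1 divide_inverse)
        qed
        note hs = this
        from \<open>x \<in> X\<close> consider "x = 0" | j s where "a \<le> s" "s \<le> t" "x = Vl j s - Vu j s \<or> x = Pl j s - Pu j s"
          unfolding X_def by blast
        then show ?thesis
        proof cases
          case 1 then show ?thesis using M0 by simp
        next
          case 2
          then have "x \<le> C*(s-a)*M" using key[OF 2(1,2), of j] by blast
          then show ?thesis using hs[OF 2(1,2)] by linarith
        qed
      qed
      have "M \<le> M / 2" unfolding M_def using X0 half by (intro cSup_least) (auto simp: M_def)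
      then have "M \<le> 0" by simp
      show ?thesis
      proof
        fix j
        have "Vl j t - Vu j t \<le> M" "Pl j t - Pu j t \<le> M"
          using upper inX1[of t j] that by auto
        then show "Vl j t \<le> Vu j t \<and> Pl j t \<le> Pu j t" using \<open>M \<le> 0\<close> by linarith
      qed
    qed
    have ind: "\<forall>t. 0 \<le> t \<longrightarrow> t \<le> T \<longrightarrow> t \<le> real n * h \<longrightarrow> (\<forall>j. Vl j t \<le> Vu j t \<and> Pl j t \<le> Pu j t)" for n :: nat
    proof (induction n)
      case 0 then show ?case using assms(8) by auto
    next
      case (Suc n)
      show ?case
      proof (rule allI, intro impI)
        fix t assume t: "0 \<le> t" "t \<le> T" "t \<le> real (Suc n) * h"
        show "\<forall>j. Vl j t \<le> Vu j t \<and> Pl j t \<le> Pu j t"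
        proof (cases "t \<le> real n * h")
          case True then show ?thesis using Suc t by blast
        next
          case False
          have a: "0 \<le> real n * h" "real n * h \<le> T" using h0 False t by auto
          then have "\<forall>j. Vl j (real n * h) \<le> Vu j (real n * h) \<and> Pl j (real n * h) \<le> Pu j (real n * h)"
            using Suc by blast
          then show ?thesis using step[of "real n * h" t] a t False by (auto simp: algebra_simps)
        qed
      qed
    qed
    obtain n :: nat where "t / h \<le> real n" using real_arch_simple by blast
    then have "t \<le> real n * h" using h0 by (simp add: field_simps)
    then show ?thesis using ind[of n] that by blast
  qed

  have weak0: "Vl j t \<le> Vu j t \<and> Pl j t \<le> Pu j t" if "0 \<le> t" for t j
    using weak[of "t+1" t j] that by simp
  define posV where "posV j \<longleftrightarrow> (\<forall>t>0. Vl j t < Vu j t)" for j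
  define posP where "posP j \<longleftrightarrow> (\<forall>t>0. Pl j t < Pu j t)" for j
  have ruleV: "posV j" if "Vl j 0 < Vu j 0 \<or> posP j \<or> posP (j+1)" for j
    unfolding posV_def
  proof (intro allI impI)
    fix t :: real assume t0: "t > 0"
    have "0 < (\<lambda>x. Vu j x - Vl j x) t"
    proof (rule pos_prop[where T = t and g = "\<lambda>x. Vu j x - Vl j x" and g' = "\<lambda>x. V'u j x - V'l j x" and K = "2*\<alpha>"
          and h = "\<lambda>x. \<beta>*((Pu j x - Pl j x) + (Pu (j+1) x - Pl (j+1) x))"])
      show "continuous_on {0..t} (\<lambda>x. Vu j x - Vl j x)"
        by (intro continuous_intros continuous_on_subset[OF cVl] continuous_on_subset[OF cVu]) auto
      show "((\<lambda>x. Vu j x - Vl j x) has_real_derivative V'u j x - V'l j x) (at x)" if "0 < x" "x < t" for x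
        using that by (intro DERIV_diff dVl dVu) auto
      show "- (2*\<alpha>) * (Vu j x - Vl j x) + \<beta>*((Pu j x - Pl j x) + (Pu (j+1) x - Pl (j+1) x)) \<le> V'u j x - V'l j x"
        if "0 < x" "x < t" for x
        using subI[OF that(1), of j] supI[OF that(1), of j] by (simp add: algebra_simps)
      show "0 \<le> \<beta>*((Pu j x - Pl j x) + (Pu (j+1) x - Pl (j+1) x))" if "0 < x" "x < t" for x
        using weak0[of x j] weak0[of x "j+1"] that a\<beta> by simp
      show "0 < Vu j 0 - Vl j 0 \<or> (\<forall>x>0. x < t \<longrightarrow> 0 < \<beta>*((Pu j x - Pl j x) + (Pu (j+1) x - Pl (j+1) x)))"
      proof (cases "Vl j 0 < Vu j 0")
        case True then show ?thesis by simp
      next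
        case False
        then have pp: "posP j \<or> posP (j+1)" using that by blast
        have "0 < \<beta>*((Pu j x - Pl j x) + (Pu (j+1) x - Pl (j+1) x))" if "x > 0" for x
        proof -
          have "Pl j x \<le> Pu j x" "Pl (j+1) x \<le> Pu (j+1) x" using weak0 that by auto
          moreover have "Pl j x < Pu j x \<or> Pl (j+1) x < Pu (j+1) x" using pp that unfolding posP_def by blast
          ultimately have "0 < (Pu j x - Pl j x) + (Pu (j+1) x - Pl (j+1) x)" by linarith
          then show ?thesis using a\<beta> by simp
        qed
        then show ?thesis by blast
      qed
    qed (use t0 weak0 in auto)
    then show "Vl j t < Vu j t" by simp
  qed
  have ruleP: "posP j" if "Pl j 0 < Pu j 0 \<or> posV j \<or> posV (j-1)" for j
    unfolding posP_def
  proof (intro allI impI)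
    fix t :: real assume t0: "t > 0"
    obtain B L where L0: "L \<ge> 0" and B: "\<And>s j. s\<in>{0..t} \<Longrightarrow> \<bar>Vl j s\<bar> \<le> B \<and> \<bar>Pl j s\<bar> \<le> B \<and> \<bar>Vu j s\<bar> \<le> B \<and> \<bar>Pu j s\<bar> \<le> B"
      and L: "\<And>y z. y\<in>{-B..B} \<Longrightarrow> z\<in>{-B..B} \<Longrightarrow> \<bar>f y - f z\<bar> \<le> L * \<bar>y - z\<bar>"
      using bounds[OF t0] by blast
    have "0 < (\<lambda>x. Pu j x - Pl j x) t"
    proof (rule pos_prop[where T = t and g = "\<lambda>x. Pu j x - Pl j x" and g' = "\<lambda>x. P'u j x - P'l j x" and K = "L + 2*\<beta>"
          and h = "\<lambda>x. \<alpha>*((Vu j x - Vl j x) + (Vu (j-1) x - Vl (j-1) x))"])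
      show "continuous_on {0..t} (\<lambda>x. Pu j x - Pl j x)"
        by (intro continuous_intros continuous_on_subset[OF cPl] continuous_on_subset[OF cPu]) auto
      show "((\<lambda>x. Pu j x - Pl j x) has_real_derivative P'u j x - P'l j x) (at x)" if "0 < x" "x < t" for x
        using that by (intro DERIV_diff dPl dPu) auto
      show "- (L + 2*\<beta>) * (Pu j x - Pl j x) + \<alpha>*((Vu j x - Vl j x) + (Vu (j-1) x - Vl (j-1) x)) \<le> P'u j x - P'l j x"
        if "0 < x" "x < t" for x
      proof -
        have xT: "x \<in> {0..t}" using that by auto
        have "\<bar>f (Pu j x) - f (Pl j x)\<bar> \<le> L * \<bar>Pu j x - Pl j x\<bar>"
          using L[of "Pu j x" "Pl j x"] B[OF xT, of j] by (simp add: abs_le_iff)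
        moreover have "\<bar>Pu j x - Pl j x\<bar> = Pu j x - Pl j x" using weak0[of x j] that by simp
        ultimately have fL: "f (Pu j x) - f (Pl j x) \<ge> - L * (Pu j x - Pl j x)" by linarith
        show ?thesis
          using subI[OF that(1), of j] supI[OF that(1), of j] fL by (simp add: algebra_simps)
      qed
      show "0 \<le> \<alpha>*((Vu j x - Vl j x) + (Vu (j-1) x - Vl (j-1) x))" if "0 < x" "x < t" for x
        using weak0[of x j] weak0[of x "j-1"] that a\<alpha> by simp
      show "0 < Pu j 0 - Pl j 0 \<or> (\<forall>x>0. x < t \<longrightarrow> 0 < \<alpha>*((Vu j x - Vl j x) + (Vu (j-1) x - Vl (j-1) x)))"
      proof (cases "Pl j 0 < Pu j 0")
        case True then show ?thesis by simp
      next
        case False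
        then have pp: "posV j \<or> posV (j-1)" using that by blast
        have "0 < \<alpha>*((Vu j x - Vl j x) + (Vu (j-1) x - Vl (j-1) x))" if "x > 0" for x
        proof -
          have "Vl j x \<le> Vu j x" "Vl (j-1) x \<le> Vu (j-1) x" using weak0 that by auto
          moreover have "Vl j x < Vu j x \<or> Vl (j-1) x < Vu (j-1) x" using pp that unfolding posV_def by blast
          ultimately have "0 < (Vu j x - Vl j x) + (Vu (j-1) x - Vl (j-1) x)" by linarith
          then show ?thesis using a\<alpha> by simp
        qed
        then show ?thesis by blast
      qed
    qed (use t0 weak0 in auto)
    then show "Pl j t < Pu j t" by simp
  qed
  have strict: "\<forall>t>0. \<forall>j. Vl j t < Vu j t \<and> Pl j t < Pu j t"
    if ex: "\<exists>j. Vl j 0 \<noteq> Vu j 0 \<or> Pl j 0 \<noteq> Pu j 0"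
  proof -
    obtain j0 where "Vl j0 0 \<noteq> Vu j0 0 \<or> Pl j0 0 \<noteq> Pu j0 0" using ex by blast
    then have "Vl j0 0 < Vu j0 0 \<or> Pl j0 0 < Pu j0 0" using assms(8) by (meson order_le_neq_trans)
    then have p0: "posV j0" using ruleV ruleP by blast
    have allV: "posV i" for i
    proof (induction i rule: int_induct[where k = j0])
      case base then show ?case by (rule p0)
    next
      case (step1 i)
      then have "posP (i+1)" using ruleP[of "i+1"] by simp
      then show ?case using ruleV by blast
    next
      case (step2 i)
      then have "posP i" using ruleP by blast
      then show ?case using ruleV[of "i-1"] by (simp add: algebra_simps)
    qed
    have allP: "posP i" for i using ruleP allV by blast
    show ?thesis using allV allP unfolding posV_def posP_def by blast
  qed
  show ?thesis using weak0 strict by auto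
qed
end
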